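(* For $n = 2^i$ with $i \ge 1$, there exists a solution to the $(n-2)$-out-of-$n$ picture-hanging puzzle on the nails $\{1,\dots,n\}$ whose length is exactly \[ 6n\log_2(n/2) = 6n(\log_2 n - 1). \]
   Context: Words are elements of the free group $F(V)$ on $V=\{1,\dots,n\}$, written additively ($+$ group operation, $-$ inverse, $0$ identity, the empty word). Length is the number of letters of the freely reduced word. For $S \subseteq V$, $w|_S$ is the image of $w$ under the homomorphism killing the generators in $S$ ("removing the nails in $S$"). For $0 \le k \le n$, a solution to the $k$-out-of-$n$ picture-hanging puzzle is a word $w$ such that for every $S \subseteq V$: $w|_S = 0 \iff |S| \ge k$ (the picture falls exactly when at least $k$ nails are removed). For $n=2$, $k=0$ and the solution is the empty word. *)

theory Defs
  imports Complex_Main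
begin

text \<open>A letter (x, True) is the generator x, (x, False) its inverse.
  The group element represented by a list is given by its free reduction.\<close>

type_synonym letter = "nat \<times> bool"
type_synonym word = "letter list"

fun fred :: "word \<Rightarrow> word" where
  "fred [] = []"
| "fred (a # w) = (case fred w of
      [] \<Rightarrow> [a]
    | b # u \<Rightarrow> (if fst a = fst b \<and> snd a \<noteq> snd b then u else a # b # u))"

definition freely_reduced :: "word \<Rightarrow> bool" where
  "freely_reduced w \<longleftrightarrow> fred w = w"

definition remove_nails :: "nat set \<Rightarrow> word \<Rightarrow> word" where
  "remove_nails S w = fred (filter (\<lambda>l. fst l \<notin> S) w)"

definition puzzle_solution :: "nat \<Rightarrow> nat \<Rightarrow> word \<Rightarrow> bool" where
  "puzzle_solution n k w \<longleftrightarrow>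
     (\<forall>l \<in> set w. fst l \<in> {1..n}) \<and>
     (\<forall>S. S \<subseteq> {1..n} \<longrightarrow> (remove_nails S w = [] \<longleftrightarrow> card S \<ge> k))"

end

theory Submission
  imports Defs
begin

definition cancels :: "letter \<Rightarrow> letter \<Rightarrow> bool" where
  "cancels a b \<longleftrightarrow> fst a = fst b \<and> snd a \<noteq> snd b"

fun cr :: "letter \<Rightarrow> word \<Rightarrow> word" where
  "cr a [] = [a]"
| "cr a (b # u) = (if cancels a b then u else a # b # u)"

lemma fred_Cons: "fred (a # u) = cr a (fred u)"
  by (cases "fred u") (auto simp: cancels_def)

declare fred.simps(2)[simp del]

definition red :: "word \<Rightarrow> bool" where
  "red w \<longleftrightarrow> successively (\<lambda>a b. \<not> cancels a b) w"

lemma red_cr: "red v \<Longrightarrow> red (cr a v)"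
  by (cases v) (auto simp: red_def successively_Cons)

lemma red_fred: "red (fred u)"
proof (induction u)
  case Nil show ?case by (simp add: red_def)
next
  case (Cons a u) then show ?case by (simp add: fred_Cons red_cr)
qed

lemma cr_cr: "red v \<Longrightarrow> cancels a b \<Longrightarrow> cr a (cr b v) = v"
proof (cases v)
  case (Cons c v')
  assume r: "red v" and ab: "cancels a b"
  show ?thesis
  proof (cases "cancels b c")
    case True
    then have "a = c" using ab by (cases a; cases c; auto simp: cancels_def)
    then show ?thesis using r True Cons
      by (cases v') (auto simp: red_def)
  next
    case False
    then show ?thesis using ab Cons by auto
  qed
qed auto

lemma fred_red: "red v \<Longrightarrow> fred v = v"
proof (induction v)
  case (Cons a v)
  then have "red v" by (auto simp: red_def successively_Cons)
  with Cons show ?case by (cases v) (auto simp: fred_Cons red_def)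
qed simp

lemma fred_fred: "fred (fred u) = fred u" by (simp add: fred_red red_fred)

lemma fred_append_right: "fred (u @ v) = fred (u @ fred v)"
  by (induction u) (simp_all add: fred_Cons fred_fred)

lemma fred_cr_append: "red x \<Longrightarrow> fred (cr a x @ v) = cr a (fred (x @ v))"
  by (cases x) (auto simp: fred_Cons cr_cr red_fred)

lemma fred_append_left: "fred (u @ v) = fred (fred u @ v)"
  by (induction u) (simp_all add: fred_Cons fred_cr_append red_fred)

definition winv :: "word \<Rightarrow> word" where
  "winv w = rev (map (\<lambda>(x,b). (x, \<not>b)) w)"

lemma winv_simps[simp]: "winv [] = []" "winv (a # w) = winv w @ [(fst a, \<not> snd a)]"
  "winv (u @ v) = winv v @ winv u" "winv (winv w) = w" "length (winv w) = length w"
  by (auto simp: winv_def case_prod_beta rev_map[symmetric] map_idI)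

lemma fst_set_winv[simp]: "fst ` set (winv w) = fst ` set w"
  by (force simp: winv_def case_prod_beta)

lemma fred_inv_cancel: "fred (w @ winv w) = []"
proof (induction w)
  case (Cons a w)
  have "fred ((a # w) @ winv (a # w)) = cr a (fred ((w @ winv w) @ [(fst a, \<not> snd a)]))"
    by (simp add: fred_Cons)
  also have "\<dots> = cr a (fred (fred (w @ winv w) @ [(fst a, \<not> snd a)]))"
    by (metis fred_append_left)
  also have "\<dots> = []" using Cons by (simp add: cancels_def fred_Cons)
  finally show ?case .
qed simp

lemma fred_inv_cancel2: "fred (winv w @ w) = []"
  using fred_inv_cancel[of "winv w"] by simp

lemma fred_mid: "fred v = [] \<Longrightarrow> fred (x @ v @ y) = fred (x @ y)"
  by (metis append_Nil fred_append_left fred_append_right)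

lemma fred_winv_triv: "fred v = [] \<Longrightarrow> fred (winv v) = []"
  using fred_mid[of v "winv v" "[]"] fred_inv_cancel2[of v] by simp

definition comm :: "word \<Rightarrow> word \<Rightarrow> word" where
  "comm u v = u @ v @ winv u @ winv v"

lemma comm_triv1: "fred u = [] \<Longrightarrow> fred (comm u v) = []"
  unfolding comm_def
  using fred_mid[of u "[]"] fred_mid[of "winv u" v] fred_winv_triv[of u] fred_inv_cancel[of v]
  by simp

lemma comm_triv2: "fred v = [] \<Longrightarrow> fred (comm u v) = []"
  unfolding comm_def
  using fred_mid[of v u] fred_mid[of "winv v" "u @ winv u" "[]"] fred_winv_triv[of v] fred_inv_cancel[of u]
  by simp

lemma fred_append_triv: "fred u = [] \<Longrightarrow> fred v = [] \<Longrightarrow> fred (u @ v) = []"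
  using fred_mid[of u "[]" v] by simp

definition flt :: "nat set \<Rightarrow> word \<Rightarrow> word" where
  "flt K w = filter (\<lambda>l. fst l \<in> K) w"

lemma flt_winv: "flt K (winv w) = winv (flt K w)"
  by (induction w) (auto simp: flt_def)

lemma flt_simps[simp]: "flt K [] = []" "flt K (u @ v) = flt K u @ flt K v"
  "flt K (winv w) = winv (flt K w)"
  "flt K (a # w) = (if fst a \<in> K then a # flt K w else flt K w)"
  by (auto simp: flt_winv) (auto simp: flt_def)

lemma flt_comm[simp]: "flt K (comm u v) = comm (flt K u) (flt K v)"
  by (simp add: comm_def)

lemma flt_cr: "red v \<Longrightarrow> fred (flt K (cr a v)) = fred (flt K (a # v))"
proof (cases v)
  case (Cons b v')
  assume r: "red v"
  show ?thesis
  proof (cases "cancels a b")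
    case True
    then have "fst a = fst b" by (simp add: cancels_def)
    then show ?thesis using True Cons cr_cr[OF red_fred, of a b]
      by (auto simp: fred_Cons)
  qed (use Cons in auto)
qed simp

lemma fred_flt_fred: "fred (flt K (fred u)) = fred (flt K u)"
proof (induction u)
  case (Cons a u)
  have "fred (flt K (fred (a # u))) = fred (flt K (a # fred u))"
    by (simp add: fred_Cons flt_cr red_fred)
  also have "\<dots> = fred (flt K (a # u))"
    using Cons by (simp add: fred_Cons)
  finally show ?case .
qed simp


abbreviation blk :: "nat \<Rightarrow> nat \<Rightarrow> nat set" where
  "blk a m \<equiv> {Suc a..<Suc (a+m)}"

definition Pw :: "nat \<Rightarrow> nat \<Rightarrow> word" where
  "Pw a m = map (\<lambda>x. (x,True)) [Suc a..<Suc (a+m)]"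

definition Qw :: "nat \<Rightarrow> nat \<Rightarrow> word" where
  "Qw a m = Pw a m @ map (\<lambda>x. (x,False)) [Suc a..<Suc (a+m)]"

fun Rw :: "nat \<Rightarrow> nat \<Rightarrow> word" where
  "Rw a 0 = []"
| "Rw a (Suc 0) = []"
| "Rw a (Suc (Suc j)) = Rw a (Suc j) @ Rw (a + 2^Suc j) (Suc j)
     @ comm (Qw a (2^Suc j)) (Pw (a + 2^Suc j) (2^Suc j))
     @ comm (Pw a (2^Suc j)) (Qw (a + 2^Suc j) (2^Suc j))"

lemma fst_set_comm[simp]: "fst ` set (comm u v) = fst ` set u \<union> fst ` set v"
  unfolding comm_def set_append image_Un fst_set_winv by blast

lemma set_Pw: "fst ` set (Pw a m) = blk a m"
  by (force simp: Pw_def)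

lemma set_Qw: "fst ` set (Qw a m) = blk a m"
  by (force simp: Qw_def Pw_def)

lemma set_Rw: "fst ` set (Rw a j) \<subseteq> blk a (2^j)"
proof (induction a j rule: Rw.induct)
  case (3 a j)
  show ?case using "3.IH" 
    unfolding Rw.simps set_append image_Un fst_set_comm set_Pw set_Qw by auto
qed simp_all

lemma len_Rw: "length (Rw a j) = 6 * 2^j * (j - 1)"
proof (induction a j rule: Rw.induct)
  case (3 a j)
  show ?case using "3.IH" by (simp add: comm_def Pw_def Qw_def algebra_simps)
qed simp_all

lemma flt_disj: "fst ` set w \<subseteq> X \<Longrightarrow> K \<inter> X = {} \<Longrightarrow> flt K w = []"
  unfolding flt_def by (auto simp: filter_empty_conv)

definition fl :: "nat set \<Rightarrow> nat \<Rightarrow> nat \<Rightarrow> nat list" where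
  "fl K a m = filter (\<lambda>x. x \<in> K) [Suc a..<Suc (a+m)]"

lemma flt_Pw: "flt K (Pw a m) = map (\<lambda>x. (x,True)) (fl K a m)"
  by (simp add: flt_def Pw_def fl_def filter_map o_def)

lemma flt_Qw: "flt K (Qw a m) = map (\<lambda>x. (x,True)) (fl K a m) @ map (\<lambda>x. (x,False)) (fl K a m)"
  by (simp add: Qw_def flt_Pw) (simp add: flt_def fl_def filter_map o_def)

lemma fl_set: "set (fl K a m) = K \<inter> blk a m"
  by (auto simp: fl_def)

lemma fl_distinct: "distinct (fl K a m)"
  by (simp add: fl_def)

lemma len_fl: "length (fl K a m) = card (K \<inter> blk a m)"
  using distinct_card[OF fl_distinct, of K a m] fl_set by simp

lemma Pw_triv: "card (K \<inter> blk a m) = 0 \<Longrightarrow> fred (flt K (Pw a m)) = []"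
  using len_fl[of K a m] by (simp add: flt_Pw)

lemma Qw_triv: "card (K \<inter> blk a m) \<le> 1 \<Longrightarrow> fred (flt K (Qw a m)) = []"
  using len_fl[of K a m]
  by (cases "fl K a m" rule: remdups_adj.cases) (auto simp: flt_Qw fred_Cons cancels_def)

lemma card_split: "card (K \<inter> blk a (m1+m2)) = card (K \<inter> blk a m1) + card (K \<inter> blk (a+m1) m2)"
proof -
  have "K \<inter> blk a (m1+m2) = (K \<inter> blk a m1) \<union> (K \<inter> blk (a+m1) m2)" by auto
  moreover have "(K \<inter> blk a m1) \<inter> (K \<inter> blk (a+m1) m2) = {}" by auto
  ultimately show ?thesis by (simp add: card_Un_disjoint)
qed

lemma fred_left_triv: "fred u = [] \<Longrightarrow> fred (u @ v) = fred v"
  using fred_mid[of u "[]" v] by simp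

lemma fred_right_triv: "fred v = [] \<Longrightarrow> fred (u @ v) = fred u"
  using fred_mid[of v u "[]"] by simp

lemma triv: "card (K \<inter> blk a (2^j)) \<le> 2 \<Longrightarrow> fred (flt K (Rw a j)) = []"
proof (induction a j rule: Rw.induct)
  case (3 a j)
  define h :: nat where "h = 2^Suc j"
  have sp: "card (K \<inter> blk a (2^Suc (Suc j))) = card (K \<inter> blk a h) + card (K \<inter> blk (a+h) h)"
    using card_split[of K a h h] by (simp add: h_def)
  have r1: "fred (flt K (Rw a (Suc j))) = []" using "3.IH"(1) "3.prems" sp by (simp add: h_def)
  have r2: "fred (flt K (Rw (a+h) (Suc j))) = []" using "3.IH"(2) "3.prems" sp by (simp add: h_def)
  have c1: "fred (flt K (comm (Qw a h) (Pw (a+h) h))) = []"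
  proof (cases "card (K \<inter> blk a h) \<le> 1")
    case True then show ?thesis by (simp only: flt_comm) (rule comm_triv1[OF Qw_triv[OF True]])
  next
    case False then have "card (K \<inter> blk (a+h) h) = 0" using "3.prems" sp by linarith
    note cc = this
    show ?thesis by (simp only: flt_comm) (rule comm_triv2[OF Pw_triv[OF cc]])
  qed
  have c2: "fred (flt K (comm (Pw a h) (Qw (a+h) h))) = []"
  proof (cases "card (K \<inter> blk a h) = 0")
    case True then show ?thesis by (simp only: flt_comm) (rule comm_triv1[OF Pw_triv[OF True]])
  next
    case False then have "card (K \<inter> blk (a+h) h) \<le> 1" using "3.prems" sp by linarith
    note cc = this
    show ?thesis by (simp only: flt_comm) (rule comm_triv2[OF Qw_triv[OF cc]])
  qed
  have e: "Rw a (Suc (Suc j)) = Rw a (Suc j) @ Rw (a+h) (Suc j) @ comm (Qw a h) (Pw (a+h) h)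
     @ comm (Pw a h) (Qw (a+h) h)" by (simp add: h_def)
  show ?case unfolding e flt_simps(2) using r1 r2 c1 c2
    by (intro fred_append_triv)
qed simp_all


lemma card_blk_K: "K \<subseteq> blk a m \<Longrightarrow> card K \<le> m"
  using card_mono[of "blk a m" K] by simp

lemma fl_empty: "card (K \<inter> blk a m) = 0 \<Longrightarrow> fl K a m = []"
  using len_fl[of K a m] by simp

lemma nontriv: "K \<subseteq> blk a (2^j) \<Longrightarrow> card K = 3 \<Longrightarrow> fred (flt K (Rw a j)) \<noteq> []"
proof (induction a j rule: Rw.induct)
  case (1 a) then show ?case using card_blk_K[of K a 1] by simp
next
  case (2 a) then show ?case using card_blk_K[of K a 2] by simp
next
  case (3 a j)
  define h :: nat where "h = 2^Suc j"
  have e: "Rw a (Suc (Suc j)) = Rw a (Suc j) @ Rw (a+h) (Suc j) @ comm (Qw a h) (Pw (a+h) h)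
     @ comm (Pw a h) (Qw (a+h) h)" by (simp add: h_def)
  have KV: "K \<subseteq> blk a (h+h)" using "3.prems" by (simp add: h_def)
  then have KK: "K \<inter> blk a (h+h) = K" by blast
  have sp: "card (K \<inter> blk a h) + card (K \<inter> blk (a+h) h) = 3"
    using card_split[of K a h h] KK "3.prems" by simp
  have fin: "finite (K \<inter> blk b m)" for b m by simp
  consider "card (K \<inter> blk (a+h) h) = 0" | "card (K \<inter> blk a h) = 0"
    | "card (K \<inter> blk a h) = 2 \<and> card (K \<inter> blk (a+h) h) = 1"
    | "card (K \<inter> blk a h) = 1 \<and> card (K \<inter> blk (a+h) h) = 2" using sp by linarith
  then show ?case
  proof cases
    case 1
    then have KB: "K \<inter> blk (a+h) h = {}" using fin by simp
    have a1: "flt K (Rw (a+h) (Suc j)) = []"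
      using set_Rw[of "a+h" "Suc j"] KB by (intro flt_disj) (auto simp: h_def)
    have a2: "flt K (Pw (a+h) h) = []" by (simp add: flt_Pw fl_empty 1)
    have a3: "fred (comm (flt K (Qw a h)) []) = []" by (rule comm_triv2) simp
    have a4: "fred (comm (flt K (Pw a h)) (flt K (Qw (a+h) h))) = []"
      by (rule comm_triv2) (simp add: Qw_triv 1)
    have "K \<subseteq> blk a h"
    proof
      fix x assume "x \<in> K"
      then have "x \<in> blk a (h+h)" "x \<notin> blk (a+h) h" using KV KB by blast+
      then show "x \<in> blk a h" by simp
    qed
    then have KA: "K \<subseteq> blk a (2 ^ Suc j)" by (simp add: h_def)
    have "fred (flt K (Rw a (Suc (Suc j)))) = fred (flt K (Rw a (Suc j)))"
      unfolding e flt_simps(2) flt_comm a1 a2 using a3 a4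
      by (simp add: fred_mid fred_right_triv)
    then show ?thesis using "3.IH"(1)[OF KA "3.prems"(2)] by simp
  next
    case 2
    then have KA: "K \<inter> blk a h = {}" using fin by simp
    have a1: "flt K (Rw a (Suc j)) = []"
      using set_Rw[of "a" "Suc j"] KA by (intro flt_disj) (auto simp: h_def)
    have a2: "flt K (Pw a h) = []" by (simp add: flt_Pw fl_empty 2)
    have a3: "fred (comm (flt K (Qw a h)) (flt K (Pw (a+h) h))) = []"
      by (rule comm_triv1) (simp add: Qw_triv 2)
    have a4: "fred (comm [] (flt K (Qw (a+h) h))) = []" by (rule comm_triv1) simp
    have "K \<subseteq> blk (a+h) h"
    proof
      fix x assume "x \<in> K"
      then have "x \<in> blk a (h+h)" "x \<notin> blk a h" using KV KA by blast+
      then show "x \<in> blk (a+h) h" by simp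
    qed
    then have KB: "K \<subseteq> blk (a + 2 ^ Suc j) (2 ^ Suc j)" by (simp add: h_def)
    have "fred (flt K (Rw a (Suc (Suc j)))) = fred (flt K (Rw (a+h) (Suc j)))"
      unfolding e flt_simps(2) flt_comm a1 a2 using a3 a4
      by (simp add: fred_mid fred_right_triv)
    then show ?thesis using "3.IH"(2)[OF KB "3.prems"(2)] by (simp add: h_def)
  next
    case 3
    have r1: "fred (flt K (Rw a (Suc j))) = []" using 3 by (intro triv) (simp add: h_def)
    have r2: "fred (flt K (Rw (a+h) (Suc j))) = []" using 3 by (intro triv) (simp add: h_def)
    have c2: "fred (comm (flt K (Pw a h)) (flt K (Qw (a+h) h))) = []"
      by (rule comm_triv2) (simp add: Qw_triv 3)
    obtain x y where xy: "fl K a h = [x, y]" using len_fl[of K a h] 3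
      by (cases "fl K a h" rule: remdups_adj.cases) auto
    obtain z where z: "fl K (a+h) h = [z]" using len_fl[of K "a+h" h] 3
      by (cases "fl K (a+h) h" rule: remdups_adj.cases) auto
    have d: "x \<noteq> y" using fl_distinct[of K a h] xy by simp
    have "x \<in> blk a h" "y \<in> blk a h" "z \<in> blk (a+h) h"
      using fl_set[of K a h] fl_set[of K "a+h" h] xy z by auto
    then have d2: "z \<noteq> x" "z \<noteq> y" by auto
    let ?c = "comm (flt K (Qw a h)) (flt K (Pw (a+h) h))"
    have "red ?c" using d d2
      by (simp add: flt_Qw flt_Pw xy z comm_def red_def cancels_def)
    then have fc: "fred ?c = ?c" by (rule fred_red)
    have "fred (flt K (Rw a (Suc (Suc j)))) = fred ?c"
      unfolding e flt_simps(2) flt_comm using r1 r2 c2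
      by (simp add: fred_left_triv fred_right_triv)
    then show ?thesis using fc by (simp add: comm_def flt_Qw xy)
  next
    case 4
    have r1: "fred (flt K (Rw a (Suc j))) = []" using 4 by (intro triv) (simp add: h_def)
    have r2: "fred (flt K (Rw (a+h) (Suc j))) = []" using 4 by (intro triv) (simp add: h_def)
    have c1: "fred (comm (flt K (Qw a h)) (flt K (Pw (a+h) h))) = []"
      by (rule comm_triv1) (simp add: Qw_triv 4)
    obtain y z where yz: "fl K (a+h) h = [y, z]" using len_fl[of K "a+h" h] 4
      by (cases "fl K (a+h) h" rule: remdups_adj.cases) auto
    obtain x where x: "fl K a h = [x]" using len_fl[of K a h] 4
      by (cases "fl K a h" rule: remdups_adj.cases) auto
    have d: "y \<noteq> z" using fl_distinct[of K "a+h" h] yz by simp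
    have "x \<in> blk a h" "y \<in> blk (a+h) h" "z \<in> blk (a+h) h"
      using fl_set[of K a h] fl_set[of K "a+h" h] yz x by auto
    then have d2: "x \<noteq> y" "x \<noteq> z" by auto
    let ?c = "comm (flt K (Pw a h)) (flt K (Qw (a+h) h))"
    have "red ?c" using d d2
      by (simp add: flt_Qw flt_Pw yz x comm_def red_def cancels_def)
    then have fc: "fred ?c = ?c" by (rule fred_red)
    have "fred (flt K (Rw a (Suc (Suc j)))) = fred ?c"
      unfolding e flt_simps(2) flt_comm using r1 r2 c1
      by (simp add: fred_left_triv fred_right_triv)
    then show ?thesis using fc by (simp add: comm_def flt_Pw x)
  qed
qed


abbreviation nd :: "letter \<Rightarrow> letter \<Rightarrow> bool" where
  "nd \<equiv> \<lambda>a b. fst a \<noteq> fst b"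

lemma succ_upt: "successively (\<lambda>x y. x \<noteq> y) [m..<n]"
  by (rule successively_mono[OF successively_if_sorted_wrt[OF sorted_wrt_upt]]) auto

lemma succ_map: "successively nd (map (\<lambda>x. (x, b)) [m..<n])"
  by (simp add: successively_map succ_upt)

lemma succ_Pw: "successively nd (Pw a m)"
  unfolding Pw_def by (rule succ_map)

lemma succ_app: "successively nd u \<Longrightarrow> successively nd v \<Longrightarrow>
   (u \<noteq> [] \<Longrightarrow> v \<noteq> [] \<Longrightarrow> fst (last u) \<noteq> fst (hd v)) \<Longrightarrow> successively nd (u @ v)"
  by (auto simp: successively_append_iff)

lemma succ_Qw: "m \<ge> 2 \<Longrightarrow> successively nd (Qw a m)"
  unfolding Qw_def Pw_def
  by (rule succ_app[OF succ_map succ_map]) (simp add: last_map hd_map)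

lemma succ_winv: "successively nd w \<Longrightarrow> successively nd (winv w)"
  unfolding winv_def by (simp add: successively_map case_prod_beta eq_commute)

lemma hd_in: "w \<noteq> [] \<Longrightarrow> fst ` set w \<subseteq> X \<Longrightarrow> fst (hd w) \<in> X"
  by (meson hd_in_set image_eqI subsetD)

lemma last_in: "w \<noteq> [] \<Longrightarrow> fst ` set w \<subseteq> X \<Longrightarrow> fst (last w) \<in> X"
  by (meson last_in_set image_eqI subsetD)

lemma winv_nil[simp]: "winv w = [] \<longleftrightarrow> w = []"
  by (simp add: winv_def)

lemma succ_comm:
  assumes "successively nd u" "successively nd v" "u \<noteq> []" "v \<noteq> []"
    "fst ` set u \<subseteq> X" "fst ` set v \<subseteq> Y" "X \<inter> Y = {}"
  shows "successively nd (comm u v)"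
proof -
  have s1: "successively nd (winv u @ winv v)"
    using assms last_in[of "winv u" X] hd_in[of "winv v" Y]
    by (intro succ_app succ_winv) auto
  have s2: "successively nd (v @ winv u @ winv v)"
    using assms last_in[of v Y] hd_in[of "winv u" X]
    by (intro succ_app s1) auto
  show ?thesis unfolding comm_def
    using assms last_in[of u X] hd_in[of v Y]
    by (intro succ_app s2) auto
qed

lemma hd_comm: "u \<noteq> [] \<Longrightarrow> hd (comm u v) = hd u"
  by (simp add: comm_def)

lemma last_comm: "v \<noteq> [] \<Longrightarrow> last (comm u v) = last (winv v)"
  by (simp add: comm_def)

lemma Pw_nil[simp]: "Pw a m = [] \<longleftrightarrow> m = 0"
  by (simp add: Pw_def)

lemma Qw_nil[simp]: "Qw a m = [] \<longleftrightarrow> m = 0"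
  by (simp add: Qw_def)

lemma comm_nil[simp]: "comm u v = [] \<longleftrightarrow> u = [] \<and> v = []"
  by (auto simp: comm_def)

lemma Rw_nil: "Rw a j = [] \<longleftrightarrow> j \<le> 1"
  using len_Rw[of a j] by (cases j) auto

lemma succ_Rw: "successively nd (Rw a j)"
proof (induction a j rule: Rw.induct)
  case (3 a j)
  define h :: nat where "h = 2^Suc j"
  have h2: "h \<ge> 2" unfolding h_def using one_le_power[of "2::nat" j] by simp
  have hn: "h \<noteq> 0" using h2 by simp
  have e: "Rw a (Suc (Suc j)) = Rw a (Suc j) @ Rw (a+h) (Suc j) @ comm (Qw a h) (Pw (a+h) h)
     @ comm (Pw a h) (Qw (a+h) h)" by (simp add: h_def)
  have disj: "blk a h \<inter> blk (a+h) h = {}" by auto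
  have IH1: "successively nd (Rw a (Suc j))" by (rule "3.IH"(1))
  have IH2: "successively nd (Rw (a+h) (Suc j))" using "3.IH"(2) by (simp add: h_def)
  have SA: "fst ` set (Rw a (Suc j)) \<subseteq> blk a h" using set_Rw[of a "Suc j"] by (simp add: h_def)
  have SB: "fst ` set (Rw (a+h) (Suc j)) \<subseteq> blk (a+h) h" using set_Rw[of "a+h" "Suc j"] by (simp add: h_def)
  have QA: "fst ` set (Qw a h) \<subseteq> blk a h" by (simp add: set_Qw)
  have PA: "fst ` set (Pw a h) \<subseteq> blk a h" by (simp add: set_Pw)
  have QB: "fst ` set (Qw (a+h) h) \<subseteq> blk (a+h) h" by (simp add: set_Qw)
  have PB: "fst ` set (Pw (a+h) h) \<subseteq> blk (a+h) h" by (simp add: set_Pw)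
  have nQA: "Qw a h \<noteq> []" and nPA: "Pw a h \<noteq> []" and nQB: "Qw (a+h) h \<noteq> []"
    and nPB: "Pw (a+h) h \<noteq> []" using hn by simp_all
  have c1: "successively nd (comm (Qw a h) (Pw (a+h) h))"
    by (rule succ_comm[OF succ_Qw[OF h2] succ_Pw nQA nPB QA PB disj])
  have c2: "successively nd (comm (Pw a h) (Qw (a+h) h))"
    by (rule succ_comm[OF succ_Pw succ_Qw[OF h2] nPA nQB PA QB disj])
  have l1: "fst (last (comm (Qw a h) (Pw (a+h) h))) \<in> blk (a+h) h"
    unfolding last_comm[OF nPB] by (rule last_in) (use nPB PB in simp_all)
  have h1: "fst (hd (comm (Pw a h) (Qw (a+h) h))) \<in> blk a h"
    unfolding hd_comm[OF nPA] by (rule hd_in[OF nPA PA])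
  have h1': "fst (hd (comm (Qw a h) (Pw (a+h) h))) \<in> blk a h"
    unfolding hd_comm[OF nQA] by (rule hd_in[OF nQA QA])
  have s12: "successively nd (comm (Qw a h) (Pw (a+h) h) @ comm (Pw a h) (Qw (a+h) h))"
  proof (rule succ_app[OF c1 c2])
    show "fst (last (comm (Qw a h) (Pw (a+h) h))) \<noteq> fst (hd (comm (Pw a h) (Qw (a+h) h)))"
      using l1 h1 by simp
  qed
  have hc: "hd (comm (Qw a h) (Pw (a+h) h) @ comm (Pw a h) (Qw (a+h) h)) = hd (comm (Qw a h) (Pw (a+h) h))"
    using nQA by simp
  have s3: "successively nd (Rw (a+h) (Suc j) @ comm (Qw a h) (Pw (a+h) h) @ comm (Pw a h) (Qw (a+h) h))"
  proof (rule succ_app[OF IH2 s12])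
    assume ne: "Rw (a+h) (Suc j) \<noteq> []"
    have "fst (last (Rw (a+h) (Suc j))) \<in> blk (a+h) h" by (rule last_in[OF ne SB])
    moreover have "fst (hd (comm (Qw a h) (Pw (a+h) h) @ comm (Pw a h) (Qw (a+h) h))) \<in> blk a h"
      unfolding hc by (rule h1')
    ultimately show "fst (last (Rw (a+h) (Suc j))) \<noteq> fst (hd (comm (Qw a h) (Pw (a+h) h) @ comm (Pw a h) (Qw (a+h) h)))"
      by simp
  qed
  have s4: "successively nd (Rw a (Suc j) @ Rw (a+h) (Suc j) @ comm (Qw a h) (Pw (a+h) h) @ comm (Pw a h) (Qw (a+h) h))"
  proof (rule succ_app[OF IH1 s3])
    assume ne: "Rw a (Suc j) \<noteq> []"
    then have ne2: "Rw (a+h) (Suc j) \<noteq> []" by (simp add: Rw_nil)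
    then have hh: "hd (Rw (a+h) (Suc j) @ comm (Qw a h) (Pw (a+h) h) @ comm (Pw a h) (Qw (a+h) h)) = hd (Rw (a+h) (Suc j))"
      by simp
    have "fst (last (Rw a (Suc j))) \<in> blk a h" by (rule last_in[OF ne SA])
    moreover have "fst (hd (Rw (a+h) (Suc j) @ comm (Qw a h) (Pw (a+h) h) @ comm (Pw a h) (Qw (a+h) h))) \<in> blk (a+h) h"
      unfolding hh by (rule hd_in[OF ne2 SB])
    ultimately show "fst (last (Rw a (Suc j))) \<noteq> fst (hd (Rw (a+h) (Suc j) @ comm (Qw a h) (Pw (a+h) h) @ comm (Pw a h) (Qw (a+h) h)))"
      by simp
  qed
  show ?case unfolding e by (rule s4)
qed simp_all

lemma red_Rw: "red (Rw a j)"
  unfolding red_def by (rule successively_mono[OF succ_Rw]) (simp only: cancels_def, blast)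


lemma remove_nails_flt: "remove_nails S w = fred (flt (- S) w)"
  by (simp add: remove_nails_def flt_def)

theorem theorem4:
  fixes i n :: nat
  assumes "i \<ge> 1" and "n = 2 ^ i"
  shows "\<exists>w. freely_reduced w \<and> puzzle_solution n (n - 2) w \<and>
             real (length w) = 6 * real n * log 2 (real n / 2)"
proof (intro exI conjI)
  let ?w = "Rw 0 i"
  show "freely_reduced ?w" unfolding freely_reduced_def by (rule fred_red[OF red_Rw])
  have V: "blk 0 (2^i) = {1..n}" using assms(2) by auto
  have letters: "\<forall>l\<in>set ?w. fst l \<in> {1..n}"
    using set_Rw[of 0 i] V by auto
  have main: "remove_nails S ?w = [] \<longleftrightarrow> n - 2 \<le> card S" if S: "S \<subseteq> {1..n}" for S
  proof -
    have finS: "finite S" using S finite_subset by blast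
    have ceq: "card (- S \<inter> blk 0 (2^i)) = n - card S"
    proof -
      have "- S \<inter> blk 0 (2^i) = {1..n} - S" using V by auto
      then show ?thesis using card_Diff_subset[OF finS S] by simp
    qed
    have cS: "card S \<le> n" using card_mono[OF _ S] by simp
    show ?thesis
    proof
      assume tr: "remove_nails S ?w = []"
      show "n - 2 \<le> card S"
      proof (rule ccontr)
        assume "\<not> n - 2 \<le> card S"
        then have "3 \<le> card (- S \<inter> blk 0 (2^i))" using ceq cS by linarith
        then obtain K where K: "K \<subseteq> - S \<inter> blk 0 (2^i)" "card K = 3"
          by (meson obtain_subset_with_card_n)
        have nt: "fred (flt K ?w) \<noteq> []" using nontriv[of K 0 i] K by auto
        have "flt K ?w = flt K (flt (- S) ?w)" using K(1) unfolding flt_def filter_filter by (intro filter_cong) auto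
        then have "fred (flt K ?w) = fred (flt K (fred (flt (- S) ?w)))"
          by (simp add: fred_flt_fred)
        also have "\<dots> = []" using tr by (simp add: remove_nails_flt)
        finally show False using nt by simp
      qed
    next
      assume "n - 2 \<le> card S"
      then have "card (- S \<inter> blk 0 (2^i)) \<le> 2" using ceq by linarith
      then show "remove_nails S ?w = []" unfolding remove_nails_flt by (rule triv)
    qed
  qed
  show "puzzle_solution n (n - 2) ?w"
    unfolding puzzle_solution_def using letters main by blast
  have n2: "real n / 2 = 2 ^ (i - 1)"
  proof -
    have "n = 2 * 2 ^ (i - 1)" using assms by (simp add: power_Suc[symmetric])
    then show ?thesis by simp
  qed
  have lg: "log 2 (real n / 2) = real (i - 1)" unfolding n2 by simp
  show "real (length ?w) = 6 * real n * log 2 (real n / 2)"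
    unfolding lg len_Rw using assms(2) by simp
qed

end
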